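(* Let $Z$ be a real random variable with $|Z|\le L$ almost surely, where $L\ge1$. Then $$\big|\tanh(\mathbb EZ)-\mathbb E\tanh(Z)\big|\le20L\cdot\mathbb E\big|\tanh(Z)-\mathbb E\tanh(Z)\big|.$$ *)

theory Defs
  imports "HOL-Probability.Probability"
begin

end

theory Submission
  imports Defs
begin

lemma tanh_artanh_real:
  fixes t :: real assumes "-1 < t" "t < 1" shows "tanh (artanh t) = t"
proof -
  define q where "q = (1 + t) / (1 - t)"
  have q: "q > 0" using assms by (simp add: q_def)
  have "exp (-2 * artanh t) = 1 / q"
    using q by (simp add: artanh_def q_def[symmetric] exp_minus exp_ln inverse_eq_divide)
  hence "tanh (artanh t) = (1 - 1/q) / (1 + 1/q)" by (simp add: tanh_real_altdef)
  also have "(1 - 1/q) = (q - 1) / q" using q by (simp add: field_simps)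
  also have "(1 + 1/q) = (q + 1) / q" using q by (simp add: field_simps)
  also have "(q - 1) / q / ((q + 1) / q) = (q - 1) / (q + 1)" using q by simp
  also have "\<dots> = t" using assms by (simp add: q_def field_simps)
  finally show ?thesis .
qed

lemma deriv_tanh_real: "DERIV tanh x :> 1 - tanh (x::real) ^ 2"
  by (auto intro!: derivative_eq_intros)

lemma tanh_sq_mono: "\<bar>x\<bar> \<le> \<bar>y\<bar> \<Longrightarrow> tanh (x::real) ^ 2 \<le> tanh y ^ 2"
proof -
  assume "\<bar>x\<bar> \<le> \<bar>y\<bar>"
  hence "tanh \<bar>x\<bar> \<le> tanh \<bar>y\<bar>" by (simp only: tanh_real_le_iff)
  hence "\<bar>tanh x\<bar> \<le> \<bar>tanh y\<bar>" by (simp only: tanh_real_abs)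
  hence "\<bar>tanh x\<bar> ^ 2 \<le> \<bar>tanh y\<bar> ^ 2" by (rule power_mono) simp
  thus ?thesis by simp
qed

lemma tanh_tangent_neg:
  fixes a z :: real assumes "a \<le> 0" "z \<le> 0"
  shows "tanh z \<ge> tanh a + (1 - tanh a ^ 2) * (z - a)"
proof (cases z a rule: linorder_cases)
  case less
  from MVT2[OF less deriv_tanh_real] obtain \<xi> where x: "z < \<xi>" "\<xi> < a"
    "tanh a - tanh z = (a - z) * (1 - tanh \<xi> ^ 2)" by blast
  have "tanh a ^ 2 \<le> tanh \<xi> ^ 2" using x assms by (intro tanh_sq_mono) simp
  hence "(a - z) * (1 - tanh \<xi> ^ 2) \<le> (a - z) * (1 - tanh a ^ 2)" using less
    by (intro mult_left_mono) auto
  moreover have "(a - z) * (1 - tanh a ^ 2) = - ((1 - tanh a ^ 2) * (z - a))" by (simp add: algebra_simps)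
  ultimately show ?thesis using x(3) by linarith
next
  case greater
  from MVT2[OF greater deriv_tanh_real] obtain \<xi> where x: "a < \<xi>" "\<xi> < z"
    "tanh z - tanh a = (z - a) * (1 - tanh \<xi> ^ 2)" by blast
  have "tanh \<xi> ^ 2 \<le> tanh a ^ 2" using x assms by (intro tanh_sq_mono) simp
  hence "(z - a) * (1 - tanh a ^ 2) \<le> (z - a) * (1 - tanh \<xi> ^ 2)" using greater
    by (intro mult_left_mono) auto
  moreover have "(z - a) * (1 - tanh a ^ 2) = ((1 - tanh a ^ 2) * (z - a))" by (simp add: algebra_simps)
  ultimately show ?thesis using x(3) by linarith
qed simp

lemma tanh_upper_pos:
  fixes a h :: real assumes "a \<ge> 0" "h \<ge> 0"
  shows "tanh (a + h) \<le> tanh a + (1 - tanh a ^ 2) * h"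
proof (cases "h = 0")
  case False
  hence lt: "a < a + h" using assms by simp
  from MVT2[OF lt deriv_tanh_real] obtain \<xi> where x: "a < \<xi>" "\<xi> < a + h"
    "tanh (a + h) - tanh a = (a + h - a) * (1 - tanh \<xi> ^ 2)" by blast
  have "tanh a ^ 2 \<le> tanh \<xi> ^ 2" using x assms by (intro tanh_sq_mono) simp
  hence "h * (1 - tanh \<xi> ^ 2) \<le> h * (1 - tanh a ^ 2)" using assms
    by (intro mult_left_mono) auto
  moreover have "tanh (a + h) - tanh a = h * (1 - tanh \<xi> ^ 2)" using x(3) by simp
  moreover have "h * (1 - tanh a ^ 2) = (1 - tanh a ^ 2) * h" by simp
  ultimately show ?thesis by linarith
qed simp

lemma tanh_upper_lip:
  fixes a h :: real assumes "h \<ge> 0"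
  shows "tanh (a + h) \<le> tanh a + h"
proof (cases "h = 0")
  case False
  hence lt: "a < a + h" using assms by simp
  from MVT2[OF lt deriv_tanh_real] obtain \<xi> where x: "a < \<xi>" "\<xi> < a + h"
    "tanh (a + h) - tanh a = (a + h - a) * (1 - tanh \<xi> ^ 2)" by blast
  have "h * (1 - tanh \<xi> ^ 2) \<le> h * 1" using assms
    by (intro mult_left_mono) auto
  moreover have "tanh (a + h) - tanh a = h * (1 - tanh \<xi> ^ 2)" using x(3) by simp
  ultimately show ?thesis by linarith
qed simp

lemma tanh_lower_lin:
  fixes z L :: real assumes "0 \<le> z" "z \<le> L" "L \<ge> 1"
  shows "z \<le> 2 * L * tanh z"
proof -
  define v where "v = exp (-2 * z)"
  have v: "v > 0" by (simp add: v_def)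
  have "1 + 2 * z \<le> exp (2 * z)" using exp_ge_add_one_self[of "2*z"] by simp
  moreover have "exp (2 * z) * v = 1" by (simp add: v_def flip: exp_add)
  ultimately have vz: "v * (1 + 2 * z) \<le> 1" using v
    by (metis mult.commute mult_left_mono less_imp_le)
  have vz0: "v \<le> 1" using assms by (simp add: v_def)
  have "z * (1 + v) \<le> (z + 1) * (1 - v)" using vz by (simp add: algebra_simps)
  also have "\<dots> \<le> 2 * L * (1 - v)"
    using assms vz v vz0 by (intro mult_right_mono) (auto simp: algebra_simps)
  finally have "z * (1 + v) \<le> 2 * L * (1 - v)" .
  hence "z \<le> 2 * L * (1 - v) / (1 + v)" using v by (simp add: field_simps)
  thus ?thesis by (simp add: tanh_real_altdef v_def)
qed

lemma pw_pos:
  fixes a z L :: real assumes "a \<ge> 0" "\<bar>z\<bar> \<le> L" "L \<ge> 1"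
  shows "z \<le> a + (2 * L / (1 - tanh a ^ 2)) * (tanh z - tanh a)
              + (2 * L / (1 - tanh a ^ 2)) * \<bar>tanh z - tanh a\<bar>"
proof (cases "z \<le> a")
  case True
  hence "tanh z \<le> tanh a" by simp
  define c where "c = 2 * L / (1 - tanh a ^ 2)"
  have "\<bar>tanh z - tanh a\<bar> = -(tanh z - tanh a)" using \<open>tanh z \<le> tanh a\<close> by simp
  hence "c * (tanh z - tanh a) + c * \<bar>tanh z - tanh a\<bar> = 0" by (simp only: mult_minus_right)
  thus ?thesis using True unfolding c_def[symmetric] by linarith
next
  case False
  define t where "t = tanh a"
  define d where "d = z - a"
  define \<tau> where "\<tau> = tanh d"
  have t: "0 \<le> t" "t < 1" using assms by (auto simp: t_def tanh_real_lt_1)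
  have d: "0 < d" "d \<le> L" using False assms by (auto simp: d_def)
  have tau: "0 \<le> \<tau>" "\<tau> < 1" using d by (auto simp: \<tau>_def tanh_real_lt_1)
  have t2: "1 - t ^ 2 > 0" using t by (simp add: abs_square_less_1)
  have den: "0 < 1 + t * \<tau>" "1 + t * \<tau> \<le> 2" using t tau
    by (auto simp: add_pos_nonneg intro: mult_le_one less_imp_le)
  have "tanh z = (t + \<tau>) / (1 + t * \<tau>)"
    unfolding t_def \<tau>_def d_def using tanh_add[of a "z - a"] by simp
  hence e: "tanh z - t = \<tau> * (1 - t ^ 2) / (1 + t * \<tau>)"
    using den by (simp add: field_simps power2_eq_square)
  have "\<tau> * (1 - t ^ 2) / 2 \<le> \<tau> * (1 - t ^ 2) / (1 + t * \<tau>)"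
    using den t2 tau by (intro divide_left_mono) auto
  hence g: "\<tau> * (1 - t ^ 2) \<le> 2 * (tanh z - t)" unfolding e by (simp add: mult.commute)
  have "d \<le> 2 * L * \<tau>" unfolding \<tau>_def using tanh_lower_lin[of d L] d assms by simp
  also have "2 * L * \<tau> = (2 * L / (1 - t ^ 2)) * (\<tau> * (1 - t ^ 2))" using t2 by simp
  also have "\<dots> \<le> (2 * L / (1 - t ^ 2)) * (2 * (tanh z - t))"
    using g t2 assms by (intro mult_left_mono) auto
  finally have "d \<le> (2 * L / (1 - t ^ 2)) * (2 * (tanh z - t))" .
  moreover have "tanh z - t \<ge> 0" using g tau t2 by (smt (verit) mult_nonneg_nonneg)
  ultimately show ?thesis unfolding t_def[symmetric] d_def by (simp add: algebra_simps)
qed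

lemma pw_neg:
  fixes a z L :: real assumes "a < 0" "\<bar>z\<bar> \<le> L" "L \<ge> 1"
  shows "z \<le> a + (1 / (1 - tanh a ^ 2) + L) * (tanh z - tanh a) + L * \<bar>tanh z - tanh a\<bar>"
proof -
  define t where "t = tanh a"
  have t: "t < 0" "-1 < t" using assms by (auto simp: t_def tanh_real_gt_neg1)
  have t2: "1 - t ^ 2 > 0" using t by (simp add: abs_square_less_1)
  have nn: "L * (tanh z - t) + L * \<bar>tanh z - t\<bar> \<ge> 0"
  proof -
    have "L * (tanh z - t) + L * \<bar>tanh z - t\<bar> = L * ((tanh z - t) + \<bar>tanh z - t\<bar>)"
      by (simp add: algebra_simps)
    thus ?thesis using assms by simp
  qed
  show ?thesis
  proof (cases "z \<le> 0")
    case True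
    have "tanh z \<ge> t + (1 - t ^ 2) * (z - a)" using tanh_tangent_neg[of a z] assms True
      by (simp add: t_def)
    hence "(tanh z - t) / (1 - t ^ 2) \<ge> z - a" using t2 by (simp add: field_simps)
    hence "z \<le> a + (1 / (1 - t ^ 2)) * (tanh z - t)" by simp
    thus ?thesis using nn unfolding t_def[symmetric] by (simp add: algebra_simps)
  next
    case False
    have "0 \<ge> t + (1 - t ^ 2) * (0 - a)" using tanh_tangent_neg[of a 0] assms
      by (simp add: t_def)
    hence h0: "a + (1 / (1 - t ^ 2)) * (- t) \<ge> 0" using t2 by (simp add: field_simps)
    have Y: "tanh z > 0" using False by simp
    have h1: "(1 / (1 - t ^ 2)) * tanh z \<ge> 0" using Y t2 by simp
    have "z \<le> 2 * L * tanh z" using tanh_lower_lin[of z L] False assms by simp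
    also have "\<dots> \<le> 2 * L * (tanh z - t)" using t assms by simp
    finally have h2: "z \<le> 2 * L * (tanh z - t)" .
    have "tanh z - t \<ge> 0" using Y t by linarith
    hence "\<bar>tanh z - t\<bar> = tanh z - t" by (rule abs_of_nonneg)
    moreover have "\<And>\<alpha>::real. a + (\<alpha> + L) * (tanh z - t) + L * (tanh z - t)
         = (a + \<alpha> * (- t)) + \<alpha> * tanh z + 2 * L * (tanh z - t)"
      by (simp add: algebra_simps)
    ultimately have "a + (1 / (1 - t ^ 2) + L) * (tanh z - t) + L * \<bar>tanh z - t\<bar>
         = (a + (1 / (1 - t ^ 2)) * (- t)) + (1 / (1 - t ^ 2)) * tanh z + 2 * L * (tanh z - t)"
      by metis
    thus ?thesis using h0 h1 h2 unfolding t_def[symmetric] by linarith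
  qed
qed

lemma exp_bound:
  fixes Z Y :: "'a \<Rightarrow> real"
  assumes P: "prob_space M" and iZ: "integrable M Z" and iY: "integrable M Y"
    and ae: "AE x in M. Z x \<le> a + \<alpha> * (Y x - t) + \<beta> * \<bar>Y x - t\<bar>"
    and t: "t = prob_space.expectation M Y"
  shows "prob_space.expectation M Z \<le> a + \<beta> * prob_space.expectation M (\<lambda>x. \<bar>Y x - t\<bar>)"
proof -
  interpret prob_space M by fact
  have iD: "integrable M (\<lambda>x. Y x - t)" using iY by auto
  have iA: "integrable M (\<lambda>x. \<bar>Y x - t\<bar>)" using iD by (rule integrable_abs)
  have i: "integrable M (\<lambda>x. a + \<alpha> * (Y x - t) + \<beta> * \<bar>Y x - t\<bar>)"
    using iD iA by auto
  have "expectation Z \<le> expectation (\<lambda>x. a + \<alpha> * (Y x - t) + \<beta> * \<bar>Y x - t\<bar>)"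
    by (rule integral_mono_AE[OF iZ i ae])
  also have "\<dots> = a + \<alpha> * (expectation Y - t) + \<beta> * expectation (\<lambda>x. \<bar>Y x - t\<bar>)"
    using iD iA iY by (simp add: integral_add integral_diff prob_space)
  finally show ?thesis using t by simp
qed

lemma one_side:
  fixes M :: "'a measure" and Z :: "'a \<Rightarrow> real" and L :: real
  assumes P: "prob_space M"
    and mZ: "Z \<in> borel_measurable M"
    and L: "L \<ge> 1"
    and ae: "AE x in M. \<bar>Z x\<bar> \<le> L"
  shows "tanh (prob_space.expectation M Z) - prob_space.expectation M (\<lambda>x. tanh (Z x))
         \<le> 2 * L * prob_space.expectation M
              (\<lambda>x. \<bar>tanh (Z x) - prob_space.expectation M (\<lambda>y. tanh (Z y))\<bar>)"
proof -
  interpret prob_space M by fact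
  have iZ: "integrable M Z" using ae mZ by (intro integrable_const_bound[where B=L]) auto
  have mY: "(\<lambda>x. tanh (Z x)) \<in> borel_measurable M"
    by (rule borel_measurable_continuous_on[OF _ mZ]) (auto intro!: continuous_intros)
  have iY: "integrable M (\<lambda>x. tanh (Z x))"
  proof (rule integrable_const_bound[where B=1, OF _ mY])
    show "AE x in M. norm (tanh (Z x)) \<le> 1"
      using tanh_real_lt_1 tanh_real_gt_neg1 by (intro AE_I2) (auto simp: abs_le_iff less_imp_le)
  qed
  define t where "t = expectation (\<lambda>x. tanh (Z x))"
  define D where "D = expectation (\<lambda>x. \<bar>tanh (Z x) - t\<bar>)"
  have D0: "D \<ge> 0" unfolding D_def by simp
  have aeL: "AE x in M. tanh (-L) \<le> tanh (Z x)"
    using ae by eventually_elim (subst tanh_real_le_iff, linarith)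
  have "expectation (\<lambda>x. tanh (-L)) \<le> t" unfolding t_def
    using aeL by (intro integral_mono_AE[OF _ iY]) auto
  hence t1: "-1 < t" using tanh_real_gt_neg1[of "-L"] by (simp add: prob_space)
  have "t \<le> expectation (\<lambda>x. tanh L)" unfolding t_def
    using ae by (intro integral_mono_AE[OF iY]) auto
  hence t2: "t < 1" using tanh_real_lt_1[of "L"] by (simp add: prob_space)
  define a where "a = artanh t"
  have ta: "tanh a = t" unfolding a_def using t1 t2 by (rule tanh_artanh_real)
  have "tanh (expectation Z) \<le> t + 2 * L * D"
  proof (cases "a \<ge> 0")
    case True
    define c where "c = 2 * L / (1 - t ^ 2)"
    have tsq: "1 - t ^ 2 > 0" using t1 t2 by (simp add: abs_square_less_1)
    have c0: "c \<ge> 0" using tsq L by (simp add: c_def)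
    have "AE x in M. Z x \<le> a + c * (tanh (Z x) - t) + c * \<bar>tanh (Z x) - t\<bar>"
      using ae by eventually_elim (use pw_pos[OF True _ L] ta in \<open>auto simp: c_def\<close>)
    from exp_bound[OF P iZ iY this t_def] have EZ: "expectation Z \<le> a + c * D"
      by (simp add: D_def)
    have "tanh (expectation Z) \<le> tanh (a + c * D)" using EZ by simp
    also have "\<dots> \<le> tanh a + (1 - tanh a ^ 2) * (c * D)"
      using True c0 D0 by (intro tanh_upper_pos) auto
    also have "\<dots> = t + 2 * L * D" using tsq by (simp add: ta c_def)
    finally show ?thesis .
  next
    case False
    hence a0: "a < 0" by simp
    have "AE x in M. Z x \<le> a + (1 / (1 - t ^ 2) + L) * (tanh (Z x) - t) + L * \<bar>tanh (Z x) - t\<bar>"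
      using ae by eventually_elim (use pw_neg[OF a0 _ L] ta in \<open>auto\<close>)
    from exp_bound[OF P iZ iY this t_def] have EZ: "expectation Z \<le> a + L * D"
      by (simp add: D_def)
    have "tanh (expectation Z) \<le> tanh (a + L * D)" using EZ by simp
    also have "\<dots> \<le> tanh a + L * D"
      using L D0 by (intro tanh_upper_lip) auto
    also have "\<dots> \<le> t + 2 * L * D" using L D0 ta by (simp add: mult_right_mono)
    finally show ?thesis .
  qed
  thus ?thesis unfolding t_def D_def by simp
qed

theorem mainTheorem8:
  fixes M :: "'a measure" and Z :: "'a \<Rightarrow> real" and L :: real
  assumes "prob_space M"
    and "Z \<in> borel_measurable M"
    and "L \<ge> 1"
    and "AE x in M. \<bar>Z x\<bar> \<le> L"
  shows "\<bar>tanh (prob_space.expectation M Z) - prob_space.expectation M (\<lambda>x. tanh (Z x))\<bar>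
         \<le> 20 * L * prob_space.expectation M
              (\<lambda>x. \<bar>tanh (Z x) - prob_space.expectation M (\<lambda>y. tanh (Z y))\<bar>)"
proof -
  interpret prob_space M by fact
  define t where "t = expectation (\<lambda>x. tanh (Z x))"
  define D where "D = expectation (\<lambda>x. \<bar>tanh (Z x) - t\<bar>)"
  have D0: "D \<ge> 0" unfolding D_def by simp
  have 1: "tanh (expectation Z) - t \<le> 2 * L * D"
    using one_side[OF assms] unfolding t_def D_def .
  have m: "(\<lambda>x. - Z x) \<in> borel_measurable M" using assms(2) by measurable
  have "tanh (expectation (\<lambda>x. - Z x)) - expectation (\<lambda>x. tanh (- Z x))
        \<le> 2 * L * expectation (\<lambda>x. \<bar>tanh (- Z x) - expectation (\<lambda>y. tanh (- Z y))\<bar>)"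
    using one_side[OF assms(1) m assms(3)] assms(4) by simp
  hence 2: "t - tanh (expectation Z) \<le> 2 * L * D"
    unfolding t_def D_def by (simp add: abs_minus_commute)
  have "\<bar>tanh (expectation Z) - t\<bar> \<le> 2 * L * D" using 1 2 by linarith
  also have "\<dots> \<le> 20 * L * D" using D0 assms(3) by (intro mult_right_mono) auto
  finally show ?thesis unfolding t_def D_def .
qed

end
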